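(* Suppose there is a horizontal lift along $\phi_0:\mathcal{A}\to\mathcal{B}$ and $H^2_{\mathrm{CE,der}}(\mathcal{A},\mathcal{B})=\{0\}$. Then for any formal Poisson deformations $\pi$ of $\pi_0$ and $\sigma$ of $\sigma_0$ there exists a derivation $X\in\lambda\mathrm{Der}(\mathcal{B})[[\lambda]]$ such that $\Phi=\exp(X)\phi_0:(\mathcal{A}[[\lambda]],\pi)\to(\mathcal{B}[[\lambda]],\sigma)$ is a Poisson morphism.
   Context: $\mathbb{K}$ is a field of characteristic zero (e.g. $\mathbb{R}$ or $\mathbb{C}$). $\mathcal{A},\mathcal{B}$ are commutative $\mathbb{K}$-algebras with Poisson brackets $\pi_0=\{\cdot,\cdot\}_{\mathcal{A}}$, $\sigma_0=\{\cdot,\cdot\}_{\mathcal{B}}$, and $\phi_0:\mathcal{A}\to\mathcal{B}$ is a Poisson morphism (algebra morphism preserving brackets). A formal Poisson deformation of $\pi_0$ is a $\mathbb{K}[[\lambda]]$-bilinear Poisson bracket $\pi=\sum_j\lambda^j\pi_j$ on $\mathcal{A}[[\lambda]]$ (with its $\lambda$-linearly extended commutative product) whose zeroth-order term is $\pi_0$. $\mathrm{Der}(\mathcal{B})$ is the space of derivations of $\mathcal{B}$; for $X\in\lambda\mathrm{Der}(\mathcal{B})[[\lambda]]$, $\exp(X)=\sum_n X^n/n!$ is an algebra automorphism of $\mathcal{B}[[\lambda]]$; maps are extended $\lambda$-linearly. Chevalley–Eilenberg complex: $C^0_{\mathrm{CE}}(\mathcal{A},\mathcal{B})=\mathcal{B}$,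 $C^k_{\mathrm{CE}}(\mathcal{A},\mathcal{B})$ = $k$-linear antisymmetric maps $\mathcal{A}^k\to\mathcal{B}$, with $(\delta D)(a_0,\dots,a_k)=\sum_j(-1)^j\{\phi_0(a_j),D(a_0,\dots,\widehat{a_j},\dots,a_k)\}_{\mathcal{B}}+\sum_{i<j}(-1)^{i+j}D(\{a_i,a_j\}_{\mathcal{A}},a_0,\dots,\widehat{a_i},\dots,\widehat{a_j},\dots,a_k)$ (for undeformed brackets). $C^k_{\mathrm{CE,der}}(\mathcal{A},\mathcal{B})$ is the subcomplex of cochains that are derivations along $\phi_0$ in each argument: $D(\dots,aa',\dots)=\phi_0(a)D(\dots,a',\dots)+D(\dots,a,\dots)\phi_0(a')$ (with $C^0_{\mathrm{CE,der}}=\mathcal{B}$); its cohomology is $H^\bullet_{\mathrm{CE,der}}(\mathcal{A},\mathcal{B})$. A horizontal lift along $\phi_0$ is a map $C^1_{\mathrm{CE,der}}(\mathcal{A},\mathcal{B})\to\mathrm{Der}(\mathcal{B})$, $D\mapsto D^h$, with $(aD)^h=\phi_0(a)D^h$ for $a\in\mathcal{A}$ (where $(aD)(a_1)=\phi_0(a)D(a_1)$) and $D^h\circ\phi_0=D$. *)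

theory Defs
  imports Complex_Main
begin

text \<open>A commutative (unital) K-algebra is a type of class comm_ring_1 together with
a scalar multiplication s :: 'k => 'a => 'a making it a K-module (library locale
module) and compatible with the product. Formal power series in lambda with
coefficients in A are represented as functions nat => 'a (n-th coefficient).\<close>

definition kalg :: "('k::field_char_0 \<Rightarrow> 'a::comm_ring_1 \<Rightarrow> 'a) \<Rightarrow> bool" where
  "kalg s \<longleftrightarrow> module s \<and> (\<forall>c x y. s c (x * y) = s c x * y)"

definition kbilinear ::
  "('k::field_char_0 \<Rightarrow> 'a::comm_ring_1 \<Rightarrow> 'a) \<Rightarrow> ('k \<Rightarrow> 'b::comm_ring_1 \<Rightarrow> 'b)
   \<Rightarrow> ('a \<Rightarrow> 'a \<Rightarrow> 'b) \<Rightarrow> bool" where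
  "kbilinear sA sB P \<longleftrightarrow> (\<forall>a. module_hom sA sB (P a)) \<and> (\<forall>b. module_hom sA sB (\<lambda>a. P a b))"

definition poisson_bracket :: "('k::field_char_0 \<Rightarrow> 'a::comm_ring_1 \<Rightarrow> 'a) \<Rightarrow> ('a \<Rightarrow> 'a \<Rightarrow> 'a) \<Rightarrow> bool" where
  "poisson_bracket s P \<longleftrightarrow> kbilinear s s P
     \<and> (\<forall>a b. P a b = - P b a)
     \<and> (\<forall>a b c. P a (P b c) + P b (P c a) + P c (P a b) = 0)
     \<and> (\<forall>a b c. P a (b * c) = P a b * c + b * P a c)"

definition alg_hom :: "('k::field_char_0 \<Rightarrow> 'a::comm_ring_1 \<Rightarrow> 'a) \<Rightarrow> ('k \<Rightarrow> 'b::comm_ring_1 \<Rightarrow> 'b)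
   \<Rightarrow> ('a \<Rightarrow> 'b) \<Rightarrow> bool" where
  "alg_hom sA sB f \<longleftrightarrow> module_hom sA sB f \<and> (\<forall>x y. f (x * y) = f x * f y) \<and> f 1 = 1"

definition poisson_hom :: "('k::field_char_0 \<Rightarrow> 'a::comm_ring_1 \<Rightarrow> 'a) \<Rightarrow> ('k \<Rightarrow> 'b::comm_ring_1 \<Rightarrow> 'b)
   \<Rightarrow> ('a \<Rightarrow> 'a \<Rightarrow> 'a) \<Rightarrow> ('b \<Rightarrow> 'b \<Rightarrow> 'b) \<Rightarrow> ('a \<Rightarrow> 'b) \<Rightarrow> bool" where
  "poisson_hom sA sB P Q f \<longleftrightarrow> alg_hom sA sB f \<and> (\<forall>x y. f (P x y) = Q (f x) (f y))"

definition is_der :: "('k::field_char_0 \<Rightarrow> 'b::comm_ring_1 \<Rightarrow> 'b) \<Rightarrow> ('b \<Rightarrow> 'b) \<Rightarrow> bool" where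
  "is_der s D \<longleftrightarrow> module_hom s s D \<and> (\<forall>x y. D (x * y) = x * D y + D x * y)"

definition der_along :: "('a::comm_ring_1 \<Rightarrow> 'b::comm_ring_1) \<Rightarrow> ('a \<Rightarrow> 'b) \<Rightarrow> bool" where
  "der_along phi D \<longleftrightarrow> (\<forall>a a'. D (a * a') = phi a * D a' + D a * phi a')"

definition CE1_der :: "('k::field_char_0 \<Rightarrow> 'a::comm_ring_1 \<Rightarrow> 'a) \<Rightarrow> ('k \<Rightarrow> 'b::comm_ring_1 \<Rightarrow> 'b)
   \<Rightarrow> ('a \<Rightarrow> 'b) \<Rightarrow> ('a \<Rightarrow> 'b) \<Rightarrow> bool" where
  "CE1_der sA sB phi D \<longleftrightarrow> module_hom sA sB D \<and> der_along phi D"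

definition CE2_der :: "('k::field_char_0 \<Rightarrow> 'a::comm_ring_1 \<Rightarrow> 'a) \<Rightarrow> ('k \<Rightarrow> 'b::comm_ring_1 \<Rightarrow> 'b)
   \<Rightarrow> ('a \<Rightarrow> 'b) \<Rightarrow> ('a \<Rightarrow> 'a \<Rightarrow> 'b) \<Rightarrow> bool" where
  "CE2_der sA sB phi D \<longleftrightarrow> kbilinear sA sB D \<and> (\<forall>a b. D a b = - D b a)
     \<and> (\<forall>a. der_along phi (D a)) \<and> (\<forall>b. der_along phi (\<lambda>a. D a b))"

definition ce_d1 :: "('a \<Rightarrow> 'a \<Rightarrow> 'a) \<Rightarrow> ('b::ab_group_add \<Rightarrow> 'b \<Rightarrow> 'b) \<Rightarrow> ('a \<Rightarrow> 'b)
   \<Rightarrow> ('a \<Rightarrow> 'b) \<Rightarrow> ('a \<Rightarrow> 'a \<Rightarrow> 'b)" where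
  "ce_d1 P Q phi E = (\<lambda>a0 a1. Q (phi a0) (E a1) - Q (phi a1) (E a0) - E (P a0 a1))"

definition ce_d2 :: "('a \<Rightarrow> 'a \<Rightarrow> 'a) \<Rightarrow> ('b::ab_group_add \<Rightarrow> 'b \<Rightarrow> 'b) \<Rightarrow> ('a \<Rightarrow> 'b)
   \<Rightarrow> ('a \<Rightarrow> 'a \<Rightarrow> 'b) \<Rightarrow> ('a \<Rightarrow> 'a \<Rightarrow> 'a \<Rightarrow> 'b)" where
  "ce_d2 P Q phi D = (\<lambda>a0 a1 a2.
      Q (phi a0) (D a1 a2) - Q (phi a1) (D a0 a2) + Q (phi a2) (D a0 a1)
    - D (P a0 a1) a2 + D (P a0 a2) a1 - D (P a1 a2) a0)"

definition H2_CE_der_zero :: "('k::field_char_0 \<Rightarrow> 'a::comm_ring_1 \<Rightarrow> 'a) \<Rightarrow> ('k \<Rightarrow> 'b::comm_ring_1 \<Rightarrow> 'b)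
   \<Rightarrow> ('a \<Rightarrow> 'a \<Rightarrow> 'a) \<Rightarrow> ('b \<Rightarrow> 'b \<Rightarrow> 'b) \<Rightarrow> ('a \<Rightarrow> 'b) \<Rightarrow> bool" where
  "H2_CE_der_zero sA sB P Q phi \<longleftrightarrow>
     (\<forall>D. CE2_der sA sB phi D \<and> ce_d2 P Q phi D = (\<lambda>_ _ _. 0)
        \<longrightarrow> (\<exists>E. CE1_der sA sB phi E \<and> ce_d1 P Q phi E = D))"

definition horizontal_lift :: "('k::field_char_0 \<Rightarrow> 'a::comm_ring_1 \<Rightarrow> 'a) \<Rightarrow> ('k \<Rightarrow> 'b::comm_ring_1 \<Rightarrow> 'b)
   \<Rightarrow> ('a \<Rightarrow> 'b) \<Rightarrow> (('a \<Rightarrow> 'b) \<Rightarrow> ('b \<Rightarrow> 'b)) \<Rightarrow> bool" where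
  "horizontal_lift sA sB phi h \<longleftrightarrow>
     (\<forall>D. CE1_der sA sB phi D \<longrightarrow>
        is_der sB (h D)
      \<and> (\<forall>a. h (\<lambda>a1. phi a * D a1) = (\<lambda>b. phi a * h D b))
      \<and> h D \<circ> phi = D)"

definition ser_mult :: "(nat \<Rightarrow> 'a::comm_ring_1) \<Rightarrow> (nat \<Rightarrow> 'a) \<Rightarrow> nat \<Rightarrow> 'a" where
  "ser_mult f g n = (\<Sum>i\<le>n. f i * g (n - i))"

definition ser_one :: "nat \<Rightarrow> 'a::comm_ring_1" where
  "ser_one n = (if n = 0 then 1 else 0)"

definition ser_smult :: "('k \<Rightarrow> 'a::comm_ring_1 \<Rightarrow> 'a) \<Rightarrow> (nat \<Rightarrow> 'k) \<Rightarrow> (nat \<Rightarrow> 'a) \<Rightarrow> nat \<Rightarrow> 'a" where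
  "ser_smult s c f n = (\<Sum>i\<le>n. s (c i) (f (n - i)))"

text \<open>The K[[lambda]]-bilinear extension of pb = sum_j lambda^j pi_j.\<close>
definition ser_bracket :: "(nat \<Rightarrow> 'a \<Rightarrow> 'a \<Rightarrow> 'a::comm_ring_1) \<Rightarrow> (nat \<Rightarrow> 'a) \<Rightarrow> (nat \<Rightarrow> 'a) \<Rightarrow> nat \<Rightarrow> 'a" where
  "ser_bracket pb f g n = (\<Sum>j\<le>n. \<Sum>k\<le>n - j. pb j (f k) (g (n - j - k)))"

definition formal_poisson_deformation ::
  "('k::field_char_0 \<Rightarrow> 'a::comm_ring_1 \<Rightarrow> 'a) \<Rightarrow> ('a \<Rightarrow> 'a \<Rightarrow> 'a) \<Rightarrow> (nat \<Rightarrow> 'a \<Rightarrow> 'a \<Rightarrow> 'a) \<Rightarrow> bool" where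
  "formal_poisson_deformation s P0 pb \<longleftrightarrow>
     pb 0 = P0 \<and> (\<forall>j. kbilinear s s (pb j))
   \<and> (\<forall>f g. ser_bracket pb f g = (\<lambda>n. - ser_bracket pb g f n))
   \<and> (\<forall>f g h. (\<lambda>n. ser_bracket pb f (ser_bracket pb g h) n + ser_bracket pb g (ser_bracket pb h f) n
                    + ser_bracket pb h (ser_bracket pb f g) n) = (\<lambda>_. 0))
   \<and> (\<forall>f g h. ser_bracket pb f (ser_mult g h)
               = (\<lambda>n. ser_mult (ser_bracket pb f g) h n + ser_mult g (ser_bracket pb f h) n))"

definition ser_map :: "('a \<Rightarrow> 'b) \<Rightarrow> (nat \<Rightarrow> 'a) \<Rightarrow> nat \<Rightarrow> 'b" where
  "ser_map phi f n = phi (f n)"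

definition ser_op :: "(nat \<Rightarrow> 'b \<Rightarrow> 'b::comm_ring_1) \<Rightarrow> (nat \<Rightarrow> 'b) \<Rightarrow> nat \<Rightarrow> 'b" where
  "ser_op X f n = (\<Sum>j\<le>n. X j (f (n - j)))"

text \<open>exp(X) = sum_m X^m / m!. For X in lambda Der(B)[[lambda]] (X_0 = 0) the
n-th coefficient of X^m f vanishes for m > n, so the sum is finite coefficientwise.\<close>
definition ser_exp :: "('k::field_char_0 \<Rightarrow> 'b::comm_ring_1 \<Rightarrow> 'b) \<Rightarrow> (nat \<Rightarrow> 'b \<Rightarrow> 'b)
   \<Rightarrow> (nat \<Rightarrow> 'b) \<Rightarrow> nat \<Rightarrow> 'b" where
  "ser_exp s X f n = (\<Sum>m\<le>n. s (inverse (of_nat (fact m))) ((ser_op X ^^ m) f n))"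

definition ser_poisson_hom :: "('k::field_char_0 \<Rightarrow> 'a::comm_ring_1 \<Rightarrow> 'a) \<Rightarrow> ('k \<Rightarrow> 'b::comm_ring_1 \<Rightarrow> 'b)
   \<Rightarrow> (nat \<Rightarrow> 'a \<Rightarrow> 'a \<Rightarrow> 'a) \<Rightarrow> (nat \<Rightarrow> 'b \<Rightarrow> 'b \<Rightarrow> 'b) \<Rightarrow> ((nat \<Rightarrow> 'a) \<Rightarrow> (nat \<Rightarrow> 'b)) \<Rightarrow> bool" where
  "ser_poisson_hom sA sB pb sigma F \<longleftrightarrow>
     (\<forall>f g. F (\<lambda>n. f n + g n) = (\<lambda>n. F f n + F g n))
   \<and> (\<forall>c f. F (ser_smult sA c f) = ser_smult sB c (F f))
   \<and> (\<forall>f g. F (ser_mult f g) = ser_mult (F f) (F g))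
   \<and> F ser_one = ser_one
   \<and> (\<forall>f g. F (ser_bracket pb f g) = ser_bracket sigma (F f) (F g))"

end

theory Submission
  imports Defs
begin



lemma sum_single_nat:
  fixes f :: "nat \<Rightarrow> 'c::comm_monoid_add"
  assumes "finite A" "a \<in> A" "\<And>x. x \<in> A \<Longrightarrow> x \<noteq> a \<Longrightarrow> f x = 0"
  shows "sum f A = f a"
  using assms by (metis (mono_tags, lifting) sum.remove sum.neutral add.right_neutral DiffE singletonI)

lemma tri_swap:
  fixes F :: "nat \<Rightarrow> nat \<Rightarrow> 'c::comm_monoid_add"
  shows "(\<Sum>j\<le>n. \<Sum>a\<le>n-j. F j a) = (\<Sum>a\<le>n. \<Sum>j\<le>n-a. F j a)"
proof -
  have "(\<Sum>j\<le>n. \<Sum>a\<le>n-j. F j a) = (\<Sum>j\<le>n. \<Sum>a\<le>n. if j + a \<le> n then F j a else 0)"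
    by (rule sum.cong, simp, rule sum.mono_neutral_cong_left) auto
  also have "\<dots> = (\<Sum>a\<le>n. \<Sum>j\<le>n. if j + a \<le> n then F j a else 0)"
    by (rule sum.swap)
  also have "\<dots> = (\<Sum>a\<le>n. \<Sum>j\<le>n-a. F j a)"
    by (rule sum.cong, simp, rule sum.mono_neutral_cong_right) auto
  finally show ?thesis .
qed

lemma tri_shift:
  fixes H :: "nat \<Rightarrow> nat \<Rightarrow> 'c::comm_monoid_add"
  shows "(\<Sum>a\<le>n. \<Sum>j\<le>a. H j (a - j)) = (\<Sum>j\<le>n. \<Sum>b\<le>n-j. H j b)"
proof -
  have "(\<Sum>a\<le>n. \<Sum>j\<le>a. H j (a - j)) = sum (\<lambda>(i,j). H i j) {(i,j). i+j \<le> n}"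
    by (rule sum.triangle_reindex_eq[symmetric])
  also have "{(i,j). i+j \<le> n} = (SIGMA j:{..n}. {..n-j})" by auto
  also have "sum (\<lambda>(i,j). H i j) \<dots> = (\<Sum>j\<le>n. \<Sum>b\<le>n-j. H j b)"
    by (rule sum.Sigma[symmetric]) auto
  finally show ?thesis .
qed

lemma sum_ext_nat:
  fixes F :: "nat \<Rightarrow> 'c::comm_monoid_add"
  assumes "a \<le> N" "\<And>i. a < i \<Longrightarrow> i \<le> N \<Longrightarrow> F i = 0"
  shows "(\<Sum>i\<le>a. F i) = (\<Sum>i\<le>N. F i)"
  by (rule sum.mono_neutral_left) (use assms in auto)




definition good :: "('k::field_char_0 \<Rightarrow> 'b::comm_ring_1 \<Rightarrow> 'b) \<Rightarrow> (nat \<Rightarrow> 'b \<Rightarrow> 'b) \<Rightarrow> bool" where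
  "good s X \<longleftrightarrow> X 0 = (\<lambda>_. 0) \<and> (\<forall>j. is_der s (X j))"

locale bset =
  fixes sB :: "'k::field_char_0 \<Rightarrow> 'b::comm_ring_1 \<Rightarrow> 'b"
  assumes kB: "kalg sB"
begin

lemma mB: "module sB" using kB by (simp add: kalg_def)

interpretation mB: module sB by (rule mB)

lemma sc_mult1: "sB c (x * y) = sB c x * y" using kB by (simp add: kalg_def)
lemma sc_mult2: "sB c (x * y) = x * sB c y"
  by (metis sc_mult1 mult.commute)

lemma der_hom: "is_der sB D \<Longrightarrow> module_hom sB sB D" by (simp add: is_der_def)
lemma der_add: "is_der sB D \<Longrightarrow> D (x + y) = D x + D y"
  using der_hom module_hom.add by blast
lemma der_zero[simp]: "is_der sB D \<Longrightarrow> D 0 = 0"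
  using der_hom module_hom.zero by blast
lemma der_diff: "is_der sB D \<Longrightarrow> D (x - y) = D x - D y"
  using der_hom module_hom.diff by blast
lemma der_scale: "is_der sB D \<Longrightarrow> D (sB c x) = sB c (D x)"
  using der_hom module_hom.scale by blast
lemma der_sum: "is_der sB D \<Longrightarrow> D (sum g S) = (\<Sum>a\<in>S. D (g a))"
  using der_hom module_hom.sum by blast
lemma der_mult: "is_der sB D \<Longrightarrow> D (x * y) = x * D y + D x * y"
  by (simp add: is_der_def)
lemma der_one: "is_der sB D \<Longrightarrow> D 1 = 0"
  using der_mult[of D 1 1] by simp

lemma good_0: "good sB X \<Longrightarrow> X 0 x = 0" by (simp add: good_def)
lemma good_der: "good sB X \<Longrightarrow> is_der sB (X j)" by (simp add: good_def)

lemma op_add: "good sB X \<Longrightarrow> ser_op X (\<lambda>n. f n + g n) = (\<lambda>n. ser_op X f n + ser_op X g n)"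
  by (auto simp: ser_op_def der_add[OF good_der] sum.distrib)

lemma op_diff: "good sB X \<Longrightarrow> ser_op X (\<lambda>n. f n - g n) = (\<lambda>n. ser_op X f n - ser_op X g n)"
  by (auto simp: ser_op_def der_diff[OF good_der] sum_subtractf)

lemma pow_add: "good sB X \<Longrightarrow> (ser_op X ^^ m) (\<lambda>n. f n + g n) = (\<lambda>n. (ser_op X ^^ m) f n + (ser_op X ^^ m) g n)"
  by (induction m) (auto simp: op_add)

lemma pow_diff: "good sB X \<Longrightarrow> (ser_op X ^^ m) (\<lambda>n. f n - g n) = (\<lambda>n. (ser_op X ^^ m) f n - (ser_op X ^^ m) g n)"
  by (induction m) (auto simp: op_diff)

lemma op_vanish:
  assumes "good sB X" "\<And>i. i < p \<Longrightarrow> f i = 0" "n < Suc p"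
  shows "ser_op X f n = 0"
  unfolding ser_op_def
proof (rule sum.neutral, intro ballI)
  fix j assume "j \<in> {..n}"
  show "X j (f (n - j)) = 0"
  proof (cases "j = 0")
    case True then show ?thesis using assms(1) by (simp add: good_0)
  next
    case False then have "n - j < p" using assms(3) \<open>j \<in> {..n}\<close> by auto
    then show ?thesis using assms(1,2) der_zero[OF good_der] by simp
  qed
qed

lemma pow_vanish:
  assumes "good sB X" "\<And>i. i < p \<Longrightarrow> f i = 0"
  shows "n < p + m \<Longrightarrow> (ser_op X ^^ m) f n = 0"
proof (induction m arbitrary: n)
  case 0 then show ?case using assms by simp
next
  case (Suc m)
  show ?case using op_vanish[OF assms(1), of "p + m" "(ser_op X ^^ m) f" n] Suc by simp
qed

lemma pow_vanish0: "good sB X \<Longrightarrow> n < m \<Longrightarrow> (ser_op X ^^ m) f n = 0"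
  using pow_vanish[of X 0 f n m] by simp

lemma op_mult:
  assumes "good sB X"
  shows "ser_op X (ser_mult f g) = (\<lambda>n. ser_mult f (ser_op X g) n + ser_mult (ser_op X f) g n)"
proof
  fix n
  have "ser_op X (ser_mult f g) n = (\<Sum>j\<le>n. \<Sum>a\<le>n-j. f a * X j (g (n-j-a)) + X j (f a) * g (n-j-a))"
    unfolding ser_op_def ser_mult_def
    by (rule sum.cong, simp, simp add: der_sum[OF good_der[OF assms]] der_mult[OF good_der[OF assms]])
  also have "\<dots> = (\<Sum>j\<le>n. \<Sum>a\<le>n-j. f a * X j (g (n-j-a))) + (\<Sum>j\<le>n. \<Sum>a\<le>n-j. X j (f a) * g (n-j-a))"
    by (simp add: sum.distrib)
  also have "(\<Sum>j\<le>n. \<Sum>a\<le>n-j. f a * X j (g (n-j-a))) = ser_mult f (ser_op X g) n"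
    unfolding ser_op_def ser_mult_def
    by (subst tri_swap) (simp add: sum_distrib_left diff_commute add.commute)
  also have "(\<Sum>j\<le>n. \<Sum>a\<le>n-j. X j (f a) * g (n-j-a)) = ser_mult (ser_op X f) g n"
  proof -
    have "ser_mult (ser_op X f) g n = (\<Sum>a\<le>n. \<Sum>j\<le>a. (\<lambda>j b. X j (f b) * g (n-j-b)) j (a - j))"
      unfolding ser_op_def ser_mult_def
      by (rule sum.cong, simp, simp add: sum_distrib_right)
    also have "\<dots> = (\<Sum>j\<le>n. \<Sum>b\<le>n-j. X j (f b) * g (n-j-b))"
      by (rule tri_shift)
    finally show ?thesis by simp
  qed
  finally show "ser_op X (ser_mult f g) n = ser_mult f (ser_op X g) n + ser_mult (ser_op X f) g n" .
qed

lemma op_smult: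
  assumes "good sB X"
  shows "ser_op X (ser_smult sB c f) = ser_smult sB c (ser_op X f)"
proof
  fix n
  have "ser_op X (ser_smult sB c f) n = (\<Sum>j\<le>n. \<Sum>i\<le>n-j. sB (c i) (X j (f (n-j-i))))"
    unfolding ser_op_def ser_smult_def
    by (rule sum.cong, simp, simp add: der_sum[OF good_der[OF assms]] der_scale[OF good_der[OF assms]])
  also have "\<dots> = ser_smult sB c (ser_op X f) n"
    unfolding ser_op_def ser_smult_def
    by (subst tri_swap) (simp add: mB.scale_sum_right diff_commute add.commute)
  finally show "ser_op X (ser_smult sB c f) n = ser_smult sB c (ser_op X f) n" .
qed

lemma pow_smult: "good sB X \<Longrightarrow> (ser_op X ^^ m) (ser_smult sB c f) = ser_smult sB c ((ser_op X ^^ m) f)"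
  by (induction m) (auto simp: op_smult)

lemma op_local:
  assumes "\<And>j. j \<le> n \<Longrightarrow> X j = X' j" "\<And>i. i \<le> n \<Longrightarrow> f i = f' i"
  shows "ser_op X f n = ser_op X' f' n"
  unfolding ser_op_def using assms by (intro sum.cong) auto

lemma pow_local:
  assumes "\<And>j. j \<le> n \<Longrightarrow> X j = X' j" "\<And>i. i \<le> n \<Longrightarrow> f i = f' i"
  shows "i \<le> n \<Longrightarrow> (ser_op X ^^ m) f i = (ser_op X' ^^ m) f' i"
proof (induction m arbitrary: i)
  case 0 then show ?case using assms by simp
next
  case (Suc m)
  show ?case using Suc by (simp, intro op_local) (use assms in auto)
qed

end



lemma pascal_gen:
  fixes T :: "nat \<Rightarrow> nat \<Rightarrow> 'c::comm_ring_1"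
  shows "(\<Sum>i\<le>m. of_nat (m choose i) * (T i (Suc m - i) + T (Suc i) (m - i)))
       = (\<Sum>i\<le>Suc m. of_nat (Suc m choose i) * T i (Suc m - i))"
proof -
  have A: "(\<Sum>i\<le>m. of_nat (m choose i) * T i (Suc m - i))
        = (\<Sum>i\<le>Suc m. of_nat (m choose i) * T i (Suc m - i))"
    by (simp add: sum.atMost_Suc binomial_eq_0)
  also have "\<dots> = T 0 (Suc m) + (\<Sum>i\<le>m. of_nat (m choose Suc i) * T (Suc i) (m - i))"
    by (subst sum.atMost_Suc_shift) simp
  finally have A': "(\<Sum>i\<le>m. of_nat (m choose i) * T i (Suc m - i)) = T 0 (Suc m) + (\<Sum>i\<le>m. of_nat (m choose Suc i) * T (Suc i) (m - i))" .
  have "(\<Sum>i\<le>Suc m. of_nat (Suc m choose i) * T i (Suc m - i))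
     = T 0 (Suc m) + (\<Sum>i\<le>m. of_nat (Suc m choose Suc i) * T (Suc i) (m - i))"
    by (subst sum.atMost_Suc_shift) simp
  also have "\<dots> = T 0 (Suc m) + (\<Sum>i\<le>m. of_nat (m choose Suc i) * T (Suc i) (m - i))
       + (\<Sum>i\<le>m. of_nat (m choose i) * T (Suc i) (m - i))"
    by (simp add: sum.distrib algebra_simps)
  finally show ?thesis using A' by (simp add: sum.distrib algebra_simps)
qed

lemma coeff_fact:
  assumes "i \<le> m"
  shows "inverse (fact m :: 'k::field_char_0) * of_nat (m choose i)
       = inverse (fact i) * inverse (fact (m - i))"
  using assms by (simp add: binomial_fact field_simps)

context bset begin

interpretation mB: module sB by (rule mB)

abbreviation ee :: "nat \<Rightarrow> 'k" where "ee m \<equiv> inverse (of_nat (fact m))"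

lemma sc_of_nat: "sB (of_nat k) x = of_nat k * x"
  by (induction k) (simp_all add: mB.scale_left_distrib algebra_simps)

lemma der_of_nat: "is_der sB D \<Longrightarrow> D (of_nat k * x) = of_nat k * D x"
  by (metis sc_of_nat der_scale)

lemma sc_mult_both: "sB a x * sB b y = sB (a * b) (x * y)"
proof -
  have "sB (a * b) (x * y) = sB a (sB b (x * y))" by simp
  also have "\<dots> = sB a (x * sB b y)" by (simp only: sc_mult2)
  also have "\<dots> = sB a x * sB b y" by (simp only: sc_mult1)
  finally show ?thesis by simp
qed

lemma exp_ext:
  assumes "good sB X" "n \<le> N"
  shows "ser_exp sB X f n = (\<Sum>m\<le>N. sB (ee m) ((ser_op X ^^ m) f n))"
  unfolding ser_exp_def
  by (rule sum_ext_nat) (use assms pow_vanish0 in auto)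

lemma exp_0: "ser_exp sB X f 0 = f 0"
  by (simp add: ser_exp_def)

lemma exp_add: "good sB X \<Longrightarrow> ser_exp sB X (\<lambda>n. f n + g n) = (\<lambda>n. ser_exp sB X f n + ser_exp sB X g n)"
  by (auto simp: ser_exp_def pow_add mB.scale_right_distrib sum.distrib)

lemma exp_diff: "good sB X \<Longrightarrow> ser_exp sB X (\<lambda>n. f n - g n) = (\<lambda>n. ser_exp sB X f n - ser_exp sB X g n)"
  by (auto simp: ser_exp_def pow_diff mB.scale_right_diff_distrib sum_subtractf)

lemma exp_smult:
  assumes "good sB X"
  shows "ser_exp sB X (ser_smult sB c f) = ser_smult sB c (ser_exp sB X f)"
proof
  fix n
  have "ser_exp sB X (ser_smult sB c f) n = (\<Sum>m\<le>n. \<Sum>i\<le>n. sB (ee m * c i) ((ser_op X ^^ m) f (n - i)))"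
    unfolding ser_exp_def pow_smult[OF assms]
    by (simp add: ser_smult_def mB.scale_sum_right)
  also have "\<dots> = (\<Sum>i\<le>n. \<Sum>m\<le>n. sB (c i * ee m) ((ser_op X ^^ m) f (n - i)))"
    by (subst sum.swap) (simp add: mult.commute)
  also have "\<dots> = ser_smult sB c (ser_exp sB X f) n"
    unfolding ser_smult_def
    by (rule sum.cong, simp, subst exp_ext[OF assms, of _ n]) (auto simp: mB.scale_sum_right)
  finally show "ser_exp sB X (ser_smult sB c f) n = ser_smult sB c (ser_exp sB X f) n" .
qed

lemma mult_vanish:
  assumes "\<And>a. a < p \<Longrightarrow> f a = 0" "\<And>b. b < q \<Longrightarrow> g b = 0" "n < p + q"
  shows "ser_mult f g n = 0"
  unfolding ser_mult_def
proof (rule sum.neutral, intro ballI)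
  fix x assume "x \<in> {..n}"
  show "f x * g (n - x) = 0"
  proof (cases "x < p")
    case True then show ?thesis using assms(1) by simp
  next
    case False then have "n - x < q" using assms(3) \<open>x \<in> {..n}\<close> by auto
    then show ?thesis using assms(2) by simp
  qed
qed

lemma op_sum_series:
  assumes "good sB X"
  shows "ser_op X (\<lambda>n. \<Sum>i\<in>I. h i n) = (\<lambda>n. \<Sum>i\<in>I. ser_op X (h i) n)"
  unfolding ser_op_def
  by (rule ext, simp only: der_sum[OF good_der[OF assms]], rule sum.swap)

lemma op_of_nat:
  assumes "good sB X"
  shows "ser_op X (\<lambda>n. of_nat k * h n) = (\<lambda>n. of_nat k * ser_op X h n)"
  unfolding ser_op_def using der_of_nat[OF good_der[OF assms]]
  by (auto intro!: ext simp: sum_distrib_left)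

lemma pow_mult_binom:
  assumes "good sB X"
  shows "(ser_op X ^^ m) (ser_mult f g) = (\<lambda>n. \<Sum>i\<le>m. of_nat (m choose i) *
            ser_mult ((ser_op X ^^ i) f) ((ser_op X ^^ (m - i)) g) n)"
proof (induction m)
  case 0 then show ?case by simp
next
  case (Suc m)
  let ?T = "\<lambda>i l. ser_mult ((ser_op X ^^ i) f) ((ser_op X ^^ l) g)"
  have "(ser_op X ^^ Suc m) (ser_mult f g) = ser_op X (\<lambda>n. \<Sum>i\<le>m. of_nat (m choose i) * ?T i (m - i) n)"
    using Suc by simp
  also have "\<dots> = (\<lambda>n. \<Sum>i\<le>m. of_nat (m choose i) * ser_op X (?T i (m - i)) n)"
    by (simp add: op_sum_series[OF assms] op_of_nat[OF assms])
  also have "\<dots> = (\<lambda>n. \<Sum>i\<le>m. of_nat (m choose i) * (?T i (Suc m - i) n + ?T (Suc i) (m - i) n))"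
    by (intro ext sum.cong refl) (simp add: op_mult[OF assms] Suc_diff_le)
  also have "\<dots> = (\<lambda>n. \<Sum>i\<le>Suc m. of_nat (Suc m choose i) * ?T i (Suc m - i) n)"
    by (rule ext) (rule pascal_gen)
  finally show ?case .
qed

lemma exp_mult:
  assumes "good sB X"
  shows "ser_exp sB X (ser_mult f g) = ser_mult (ser_exp sB X f) (ser_exp sB X g)"
proof
  fix n
  let ?P = "\<lambda>i. ser_op X ^^ i"
  let ?T = "\<lambda>i l. ser_mult (?P i f) (?P l g) n"
  let ?H = "\<lambda>i l. sB (ee i * ee l) (?T i l)"
  have "ser_exp sB X (ser_mult f g) n = (\<Sum>m\<le>n. \<Sum>i\<le>m. sB (ee m) (of_nat (m choose i) * ?T i (m - i)))"
    unfolding ser_exp_def pow_mult_binom[OF assms] by (simp add: mB.scale_sum_right)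
  also have "\<dots> = (\<Sum>m\<le>n. \<Sum>i\<le>m. ?H i (m - i))"
    by (intro sum.cong refl) (simp add: sc_of_nat[symmetric] coeff_fact)
  also have "\<dots> = (\<Sum>i\<le>n. \<Sum>l\<le>n-i. ?H i l)"
    by (rule tri_shift)
  also have "\<dots> = (\<Sum>i\<le>n. \<Sum>l\<le>n. ?H i l)"
  proof (rule sum.cong[OF refl])
    fix i assume "i \<in> {..n}"
    show "(\<Sum>l\<le>n-i. ?H i l) = (\<Sum>l\<le>n. ?H i l)"
    proof (rule sum_ext_nat)
      fix l assume "n - i < l"
      then have "?T i l = 0"
        by (intro mult_vanish[of i _ l]) (auto intro: pow_vanish0[OF assms])
      then show "?H i l = 0" by simp
    qed simp
  qed
  also have "\<dots> = (\<Sum>i\<le>n. \<Sum>l\<le>n. \<Sum>a\<le>n. sB (ee i) (?P i f a) * sB (ee l) (?P l g (n - a)))"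
    by (simp add: ser_mult_def mB.scale_sum_right sc_mult_both)
  also have "\<dots> = (\<Sum>a\<le>n. \<Sum>i\<le>n. \<Sum>l\<le>n. sB (ee i) (?P i f a) * sB (ee l) (?P l g (n - a)))"
    by (subst sum.swap, rule sum.cong, simp, rule sum.swap)
  also have "\<dots> = ser_mult (ser_exp sB X f) (ser_exp sB X g) n"
    unfolding ser_mult_def
    by (rule sum.cong, simp, subst exp_ext[OF assms, of a n for a], simp,
        subst exp_ext[OF assms, of "n - a" n for a], simp) (simp add: sum_product)
  finally show "ser_exp sB X (ser_mult f g) n = ser_mult (ser_exp sB X f) (ser_exp sB X g) n" .
qed

lemma exp_one:
  assumes "good sB X"
  shows "ser_exp sB X ser_one = ser_one"
proof -
  have z: "ser_op X (\<lambda>_. 0) = (\<lambda>_. 0)"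
    unfolding ser_op_def using der_zero[OF good_der[OF assms]] by auto
  have o: "ser_op X ser_one = (\<lambda>_. 0)"
    unfolding ser_op_def ser_one_def using der_zero[OF good_der[OF assms]] der_one[OF good_der[OF assms]]
    by (auto intro!: ext sum.neutral)
  have p: "m \<ge> 1 \<Longrightarrow> (ser_op X ^^ m) ser_one = (\<lambda>_. 0)" for m
  proof (induction m)
    case (Suc m) then show ?case using o z by (cases "m = 0") auto
  qed simp
  show ?thesis
  proof
    fix n
    have "ser_exp sB X ser_one n = sB (ee 0) ((ser_op X ^^ 0) ser_one n)"
      unfolding ser_exp_def
      by (rule sum_single_nat[of "{..n}" 0]) (auto simp: p)
    then show "ser_exp sB X ser_one n = ser_one n" by simp
  qed
qed

lemma exp_local:
  assumes "\<And>j. j \<le> n \<Longrightarrow> X j = X' j" "\<And>i. i \<le> n \<Longrightarrow> f i = f' i"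
  shows "ser_exp sB X f n = ser_exp sB X' f' n"
  unfolding ser_exp_def using pow_local[OF assms] by simp

end



definition pert :: "(nat \<Rightarrow> 'b \<Rightarrow> 'b::comm_ring_1) \<Rightarrow> nat \<Rightarrow> ('b \<Rightarrow> 'b) \<Rightarrow> nat \<Rightarrow> 'b \<Rightarrow> 'b" where
  "pert X k Y = (\<lambda>j. if j = Suc k then (\<lambda>b. X j b + Y b) else X j)"

lemma ser_op_apply: "ser_op X f n = (\<Sum>j\<le>n. X j (f (n - j)))"
  by (simp add: ser_op_def)

context bset begin

interpretation mB: module sB by (rule mB)

lemma der_sum2: "is_der sB D \<Longrightarrow> is_der sB E \<Longrightarrow> is_der sB (\<lambda>b. D b + E b)"
  unfolding is_der_def module_hom_iff
  by (auto simp: mB.scale_right_distrib algebra_simps)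

lemma good_pert: "good sB X \<Longrightarrow> is_der sB Y \<Longrightarrow> good sB (pert X k Y)"
  unfolding good_def pert_def using der_sum2 by auto

lemma pert_pow:
  assumes g: "good sB X" and y: "is_der sB Y"
  shows "n \<le> Suc k \<Longrightarrow> (ser_op (pert X k Y) ^^ m) f n = (ser_op X ^^ m) f n + (if m = 1 \<and> n = Suc k then Y (f 0) else 0)"
proof (induction m arbitrary: n)
  case 0 then show ?case by simp
next
  case (Suc m)
  show ?case
  proof (cases "m = 0")
    case True
    show ?thesis
    proof (cases "n = Suc k")
      case False
      then have "n \<le> k" using Suc.prems by simp
      then show ?thesis using True False
        by (simp add: ser_op_def pert_def)
    next
      case T2: True
      have "ser_op (pert X k Y) f n = (\<Sum>j\<le>k. pert X k Y j (f (n - j))) + pert X k Y (Suc k) (f 0)"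
        unfolding ser_op_def T2 by (simp add: sum.atMost_Suc)
      also have "(\<Sum>j\<le>k. pert X k Y j (f (n - j))) = (\<Sum>j\<le>k. X j (f (n - j)))"
        by (rule sum.cong) (auto simp: pert_def)
      also have "ser_op X f n = (\<Sum>j\<le>k. X j (f (n - j))) + X (Suc k) (f 0)"
        unfolding ser_op_def T2 by (simp add: sum.atMost_Suc)
      ultimately show ?thesis using True T2 by (simp add: pert_def)
    qed
  next
    case False
    have tw: "pert X k Y j ((ser_op (pert X k Y) ^^ m) f (n - j)) = X j ((ser_op X ^^ m) f (n - j))"
      if j: "j \<le> n" for j
    proof (cases "j = 0")
      case True then show ?thesis using g by (simp add: pert_def good_0)
    next
      case jn: False
      then have e: "(ser_op (pert X k Y) ^^ m) f (n - j) = (ser_op X ^^ m) f (n - j)"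
        using Suc j by auto
      show ?thesis
      proof (cases "j = Suc k")
        case False then show ?thesis using e by (simp add: pert_def)
      next
        case True
        then have "n - j = 0" using Suc.prems j by auto
        then have "(ser_op X ^^ m) f (n - j) = 0" using pow_vanish0[OF g] \<open>m \<noteq> 0\<close> by simp
        then show ?thesis using e True der_zero[OF y] der_zero[OF good_der[OF g]]
          by (simp add: pert_def)
      qed
    qed
    have "ser_op (pert X k Y) G' n = ser_op X G n"
      if "G' = (ser_op (pert X k Y) ^^ m) f" "G = (ser_op X ^^ m) f" for G' G
      unfolding ser_op_apply by (rule sum.cong) (auto simp: tw that)
    then have "ser_op (pert X k Y) ((ser_op (pert X k Y) ^^ m) f) n = ser_op X ((ser_op X ^^ m) f) n"
      by blast
    then show ?thesis using False by simp
  qed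
qed

lemma exp_pert:
  assumes g: "good sB X" and y: "is_der sB Y" and n: "n \<le> Suc k"
  shows "ser_exp sB (pert X k Y) f n = ser_exp sB X f n + (if n = Suc k then Y (f 0) else 0)"
proof -
  have "ser_exp sB (pert X k Y) f n = ser_exp sB X f n
        + (\<Sum>m\<le>n. sB (ee m) (if m = 1 \<and> n = Suc k then Y (f 0) else 0))"
    unfolding ser_exp_def using n
    by (simp add: pert_pow[OF g y] mB.scale_right_distrib sum.distrib)
  also have "(\<Sum>m\<le>n. sB (ee m) (if m = 1 \<and> n = Suc k then Y (f 0) else 0))
      = (if n = Suc k then Y (f 0) else 0)"
  proof (cases "n = Suc k")
    case True
    have "(\<Sum>m\<le>n. sB (ee m) (if m = 1 \<and> n = Suc k then Y (f 0) else 0))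
       = sB (ee 1) (if 1 = (1::nat) \<and> n = Suc k then Y (f 0) else 0)"
      by (rule sum_single_nat[of "{..n}" 1]) (use True in auto)
    then show ?thesis using True by simp
  qed simp
  finally show ?thesis .
qed

end



definition cs :: "'a \<Rightarrow> nat \<Rightarrow> 'a::zero" where "cs a = (\<lambda>n. if n = 0 then a else 0)"
definition sh :: "(nat \<Rightarrow> 'a) \<Rightarrow> nat \<Rightarrow> 'a::zero" where "sh f = (\<lambda>n. if n = 0 then 0 else f (n - 1))"

lemma ser_bracket_apply: "ser_bracket pb f g n = (\<Sum>j\<le>n. \<Sum>k\<le>n - j. pb j (f k) (g (n - j - k)))"
  by (simp add: ser_bracket_def)

lemma br_0: "ser_bracket pb f g 0 = pb 0 (f 0) (g 0)"
  by (simp add: ser_bracket_def)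

lemma br_local:
  assumes "\<And>i. i \<le> n \<Longrightarrow> f i = f' i" "\<And>i. i \<le> n \<Longrightarrow> g i = g' i"
  shows "ser_bracket pb f g n = ser_bracket pb f' g' n"
  unfolding ser_bracket_def using assms by (intro sum.cong refl) auto

lemma mult_lowzero1:
  fixes u w :: "nat \<Rightarrow> 'b::comm_ring_1"
  assumes "\<And>i. i < p \<Longrightarrow> u i = 0"
  shows "ser_mult u w p = u p * w 0"
proof -
  have "ser_mult u w p = u p * w (p - p)"
    unfolding ser_mult_def
    by (rule sum_single_nat) (use assms(1) in \<open>auto\<close>)
  then show ?thesis by simp
qed

lemma mult_lowzero2:
  fixes u w :: "nat \<Rightarrow> 'b::comm_ring_1"
  assumes "\<And>i. i < p \<Longrightarrow> u i = 0"
  shows "ser_mult w u p = w 0 * u p"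
proof -
  have "ser_mult w u p = w 0 * u (p - 0)"
    unfolding ser_mult_def
    by (rule sum_single_nat) (use assms(1) in \<open>auto\<close>)
  then show ?thesis by simp
qed

lemma mult_cs: "ser_mult (cs (a::'a::comm_ring_1)) (cs b) = cs (a * b)"
proof
  fix n
  have "ser_mult (cs a) (cs b) n = cs a 0 * cs b (n - 0)"
    unfolding ser_mult_def by (rule sum_single_nat[of "{..n}" 0]) (auto simp: cs_def)
  then show "ser_mult (cs a) (cs b) n = cs (a * b) n" by (simp add: cs_def)
qed

lemma cs_add: "cs (a + b) = (\<lambda>n. cs a n + cs (b::'a::comm_monoid_add) n)"
  by (auto simp: cs_def)

lemma decomp_sh: "(g::nat \<Rightarrow> 'a::comm_monoid_add) = (\<lambda>n. cs (g 0) n + sh (\<lambda>n. g (Suc n)) n)"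
  by (rule ext, case_tac n) (auto simp: cs_def sh_def)

context
  fixes s :: "'k::field_char_0 \<Rightarrow> 'b::comm_ring_1 \<Rightarrow> 'b" and pb :: "nat \<Rightarrow> 'b \<Rightarrow> 'b \<Rightarrow> 'b"
  assumes m: "module s" and kb: "\<And>j. kbilinear s s (pb j)"
begin

lemma h2: "module_hom s s (pb j a)" using kb by (simp add: kbilinear_def)
lemma h1: "module_hom s s (\<lambda>a. pb j a b)" using kb by (simp add: kbilinear_def)

lemma pb_add2: "pb j a (x + y) = pb j a x + pb j a y" using h2 module_hom.add by blast
lemma pb_add1: "pb j (x + y) b = pb j x b + pb j y b" using h1 module_hom.add by fastforce
lemma pb_diff2: "pb j a (x - y) = pb j a x - pb j a y" using h2 module_hom.diff by blast
lemma pb_zero2[simp]: "pb j a 0 = 0" using h2 module_hom.zero by blast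
lemma pb_zero1[simp]: "pb j 0 b = 0" using h1 module_hom.zero by fastforce
lemma pb_neg2: "pb j a (- x) = - pb j a x" using h2 module_hom.neg by blast
lemma pb_neg1: "pb j (- x) b = - pb j x b" using h1 module_hom.neg by fastforce
lemma pb_scale2: "pb j a (s r x) = s r (pb j a x)" using h2 module_hom.scale by blast

lemma br_add2: "ser_bracket pb f (\<lambda>n. g n + h n) = (\<lambda>n. ser_bracket pb f g n + ser_bracket pb f h n)"
  by (auto simp: ser_bracket_def pb_add2 sum.distrib)

lemma br_add1: "ser_bracket pb (\<lambda>n. g n + h n) f = (\<lambda>n. ser_bracket pb g f n + ser_bracket pb h f n)"
  by (auto simp: ser_bracket_def pb_add1 sum.distrib)

lemma br_diff2: "ser_bracket pb f (\<lambda>n. g n - h n) = (\<lambda>n. ser_bracket pb f g n - ser_bracket pb f h n)"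
  by (auto simp: ser_bracket_def pb_diff2 sum_subtractf)

lemma br_scale2: "ser_bracket pb f (\<lambda>n. s r (g n)) = (\<lambda>n. s r (ser_bracket pb f g n))"
  using m by (auto simp: ser_bracket_def pb_scale2 module.scale_sum_right)

lemma br_vanish_low:
  assumes "\<And>i. i < p \<Longrightarrow> g i = 0" "n < p"
  shows "ser_bracket pb f g n = 0"
  unfolding ser_bracket_def using assms by (intro sum.neutral ballI) auto

lemma br_vanish2:
  assumes "\<And>i. i < p \<Longrightarrow> g i = 0"
  shows "ser_bracket pb f g p = pb 0 (f 0) (g p)"
proof -
  have "ser_bracket pb f g p = (\<Sum>k\<le>p - 0. pb 0 (f k) (g (p - 0 - k)))"
    unfolding ser_bracket_def
  proof (rule sum_single_nat)
    fix j assume "j \<in> {..p}" "j \<noteq> 0"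
    then show "(\<Sum>k\<le>p - j. pb j (f k) (g (p - j - k))) = 0"
      using assms by (intro sum.neutral ballI) auto
  qed auto
  also have "\<dots> = pb 0 (f 0) (g (p - 0 - 0))"
    by (rule sum_single_nat) (use assms in auto)
  finally show ?thesis by simp
qed

lemma br_sh2: "ser_bracket pb f (sh g) = sh (ser_bracket pb f g)"
proof
  fix n
  show "ser_bracket pb f (sh g) n = sh (ser_bracket pb f g) n"
  proof (cases n)
    case 0 then show ?thesis by (simp add: ser_bracket_def sh_def)
  next
    case (Suc m)
    have "ser_bracket pb f (sh g) n = (\<Sum>j\<le>m. \<Sum>k\<le>Suc m - j. pb j (f k) (sh g (Suc m - j - k)))
          + (\<Sum>k\<le>0. pb (Suc m) (f k) (sh g (0 - k)))"
      unfolding ser_bracket_def Suc by (simp add: sum.atMost_Suc)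
    also have "(\<Sum>k\<le>0. pb (Suc m) (f k) (sh g (0 - k))) = 0" by (simp add: sh_def)
    also have "(\<Sum>j\<le>m. \<Sum>k\<le>Suc m - j. pb j (f k) (sh g (Suc m - j - k)))
        = (\<Sum>j\<le>m. \<Sum>k\<le>m - j. pb j (f k) (g (m - j - k)))"
    proof (rule sum.cong[OF refl])
      fix j assume j: "j \<in> {..m}"
      then have "Suc m - j = Suc (m - j)" by auto
      then have "(\<Sum>k\<le>Suc m - j. pb j (f k) (sh g (Suc m - j - k)))
          = (\<Sum>k\<le>m - j. pb j (f k) (sh g (Suc m - j - k))) + pb j (f (Suc (m - j))) (sh g 0)"
        by (simp add: sum.atMost_Suc)
      also have "\<dots> = (\<Sum>k\<le>m - j. pb j (f k) (g (m - j - k)))"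
        using j by (auto simp: sh_def intro!: sum.cong)
      finally show "(\<Sum>k\<le>Suc m - j. pb j (f k) (sh g (Suc m - j - k))) = (\<Sum>k\<le>m - j. pb j (f k) (g (m - j - k)))" .
    qed
    finally show ?thesis using Suc by (simp add: sh_def ser_bracket_def)
  qed
qed

end



lemma smult_cs: "module s \<Longrightarrow> ser_smult s (cs r) g = (\<lambda>n. s r (g n))"
proof
  fix n assume m: "module s"
  have "ser_smult s (cs r) g n = s (cs r 0) (g (n - 0))"
    unfolding ser_smult_def by (rule sum_single_nat[of "{..n}" 0]) (auto simp: cs_def module.scale_zero_left[OF m])
  then show "ser_smult s (cs r) g n = s r (g n)" by (simp add: cs_def)
qed

lemma smult_sh: "module s \<Longrightarrow> ser_smult s (\<lambda>i. if i = 1 then 1 else 0) g = sh g"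
proof
  fix n assume m: "module s"
  show "ser_smult s (\<lambda>i. if i = 1 then 1 else 0) g n = sh g n"
  proof (cases n)
    case 0 then show ?thesis by (simp add: ser_smult_def sh_def module.scale_zero_left[OF m])
  next
    case (Suc m')
    have "ser_smult s (\<lambda>i. if i = 1 then 1 else 0) g n = s (if 1 = (1::nat) then 1 else 0) (g (n - 1))"
      unfolding ser_smult_def by (rule sum_single_nat[of "{..n}" 1]) (auto simp: Suc module.scale_zero_left[OF m])
    then show ?thesis using Suc by (simp add: sh_def module.scale_one[OF m])
  qed
qed

lemma mult_diff1: "ser_mult (\<lambda>n. a n - b n) c = (\<lambda>n. ser_mult a c n - ser_mult b c n)"
  by (auto simp: ser_mult_def sum_subtractf algebra_simps)
lemma mult_add1: "ser_mult (\<lambda>n. a n + b n) c = (\<lambda>n. ser_mult a c n + ser_mult b c n)"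
  by (auto simp: ser_mult_def sum.distrib algebra_simps)
lemma mult_diff2: "ser_mult c (\<lambda>n. a n - b n) = (\<lambda>n. ser_mult c a n - ser_mult c b n)"
  by (auto simp: ser_mult_def sum_subtractf algebra_simps)
lemma sh_diff: "sh (\<lambda>n. a n - b n) = (\<lambda>n. sh a n - sh (b::nat \<Rightarrow> 'a::ab_group_add) n)"
  by (auto simp: sh_def fun_eq_iff)

locale main = bset sB for sB :: "'k::field_char_0 \<Rightarrow> 'b::comm_ring_1 \<Rightarrow> 'b" +
  fixes sA :: "'k \<Rightarrow> 'a::comm_ring_1 \<Rightarrow> 'a" and pi0 :: "'a \<Rightarrow> 'a \<Rightarrow> 'a"
    and sigma0 :: "'b \<Rightarrow> 'b \<Rightarrow> 'b" and phi0 :: "'a \<Rightarrow> 'b"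
    and pid :: "nat \<Rightarrow> 'a \<Rightarrow> 'a \<Rightarrow> 'a" and sigma :: "nat \<Rightarrow> 'b \<Rightarrow> 'b \<Rightarrow> 'b"
  assumes kA: "kalg sA" and pA: "poisson_bracket sA pi0" and pB: "poisson_bracket sB sigma0"
    and ph: "poisson_hom sA sB pi0 sigma0 phi0"
    and hl: "\<exists>h. horizontal_lift sA sB phi0 h" and H2: "H2_CE_der_zero sA sB pi0 sigma0 phi0"
    and dA: "formal_poisson_deformation sA pi0 pid" and dB: "formal_poisson_deformation sB sigma0 sigma"
begin

interpretation mB: module sB by (rule mB)

lemma mA: "module sA" using kA by (simp add: kalg_def)
interpretation mA: module sA by (rule mA)

lemma kbA: "kbilinear sA sA (pid j)" using dA unfolding formal_poisson_deformation_def by blast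
lemma kbB: "kbilinear sB sB (sigma j)" using dB unfolding formal_poisson_deformation_def by blast
lemma pid0: "pid 0 = pi0" using dA unfolding formal_poisson_deformation_def by blast
lemma sig0: "sigma 0 = sigma0" using dB unfolding formal_poisson_deformation_def by blast
lemma antA: "ser_bracket pid f g = (\<lambda>n. - ser_bracket pid g f n)"
  using dA unfolding formal_poisson_deformation_def by blast
lemma antB: "ser_bracket sigma f g = (\<lambda>n. - ser_bracket sigma g f n)"
  using dB unfolding formal_poisson_deformation_def by blast
lemma jacA: "(\<lambda>n. ser_bracket pid f (ser_bracket pid g h) n + ser_bracket pid g (ser_bracket pid h f) n
                    + ser_bracket pid h (ser_bracket pid f g) n) = (\<lambda>_. 0)"
  using dA unfolding formal_poisson_deformation_def by blast
lemma jacB: "(\<lambda>n. ser_bracket sigma f (ser_bracket sigma g h) n + ser_bracket sigma g (ser_bracket sigma h f) n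
                    + ser_bracket sigma h (ser_bracket sigma f g) n) = (\<lambda>_. 0)"
  using dB unfolding formal_poisson_deformation_def by blast
lemma leibA: "ser_bracket pid f (ser_mult g h)
               = (\<lambda>n. ser_mult (ser_bracket pid f g) h n + ser_mult g (ser_bracket pid f h) n)"
  using dA unfolding formal_poisson_deformation_def by blast
lemma leibB: "ser_bracket sigma f (ser_mult g h)
               = (\<lambda>n. ser_mult (ser_bracket sigma f g) h n + ser_mult g (ser_bracket sigma f h) n)"
  using dB unfolding formal_poisson_deformation_def by blast

lemma phi_hom: "module_hom sA sB phi0" using ph by (simp add: poisson_hom_def alg_hom_def)
lemma phi_add: "phi0 (x + y) = phi0 x + phi0 y" using phi_hom module_hom.add by blast
lemma phi_diff: "phi0 (x - y) = phi0 x - phi0 y" using phi_hom module_hom.diff by blast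
lemma phi_zero[simp]: "phi0 0 = 0" using phi_hom module_hom.zero by blast
lemma phi_scale: "phi0 (sA r x) = sB r (phi0 x)" using phi_hom module_hom.scale by blast
lemma phi_sum: "phi0 (sum g S) = (\<Sum>a\<in>S. phi0 (g a))" using phi_hom module_hom.sum by blast
lemma phi_mult: "phi0 (x * y) = phi0 x * phi0 y" using ph by (simp add: poisson_hom_def alg_hom_def)
lemma phi_one: "phi0 1 = 1" using ph by (simp add: poisson_hom_def alg_hom_def)
lemma phi_br: "phi0 (pi0 x y) = sigma0 (phi0 x) (phi0 y)" using ph by (simp add: poisson_hom_def)

lemma piA_anti: "pi0 x y = - pi0 y x" using pA unfolding poisson_bracket_def by blast
lemma sig_neg2: "sigma0 x (- y) = - sigma0 x y"
  using pb_neg2[where pb=sigma, OF mB kbB, of 0] sig0 by simp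

abbreviation Phi where "Phi X f \<equiv> ser_exp sB X (ser_map phi0 f)"

lemma map_add: "ser_map phi0 (\<lambda>n. f n + g n) = (\<lambda>n. ser_map phi0 f n + ser_map phi0 g n)"
  by (simp add: ser_map_def phi_add fun_eq_iff)
lemma map_diff: "ser_map phi0 (\<lambda>n. f n - g n) = (\<lambda>n. ser_map phi0 f n - ser_map phi0 g n)"
  by (simp add: ser_map_def phi_diff fun_eq_iff)
lemma map_smult: "ser_map phi0 (ser_smult sA c f) = ser_smult sB c (ser_map phi0 f)"
  by (auto simp: ser_map_def ser_smult_def phi_sum phi_scale fun_eq_iff)
lemma map_mult: "ser_map phi0 (ser_mult f g) = ser_mult (ser_map phi0 f) (ser_map phi0 g)"
  by (auto simp: ser_map_def ser_mult_def phi_sum phi_mult fun_eq_iff)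
lemma map_one: "ser_map phi0 ser_one = ser_one"
  by (auto simp: ser_map_def ser_one_def phi_one fun_eq_iff)
lemma map_sh: "ser_map phi0 (sh f) = sh (ser_map phi0 f)"
  by (auto simp: ser_map_def sh_def fun_eq_iff)
lemma map_scale: "ser_map phi0 (\<lambda>n. sA r (f n)) = (\<lambda>n. sB r (ser_map phi0 f n))"
  by (auto simp: ser_map_def phi_scale fun_eq_iff)

lemma Phi_0: "Phi X f 0 = phi0 (f 0)" by (simp add: exp_0 ser_map_def)

lemma Phi_add: "good sB X \<Longrightarrow> Phi X (\<lambda>n. f n + g n) = (\<lambda>n. Phi X f n + Phi X g n)"
  by (simp add: map_add exp_add)
lemma Phi_diff: "good sB X \<Longrightarrow> Phi X (\<lambda>n. f n - g n) = (\<lambda>n. Phi X f n - Phi X g n)"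
  by (simp add: map_diff exp_diff)
lemma Phi_zero: "good sB X \<Longrightarrow> Phi X (\<lambda>_. 0) = (\<lambda>_. 0)"
  using Phi_diff[of X "\<lambda>_. 0" "\<lambda>_. 0"] by simp
lemma Phi_neg: "good sB X \<Longrightarrow> Phi X (\<lambda>n. - f n) = (\<lambda>n. - Phi X f n)"
  using Phi_diff[of X "\<lambda>_. 0" f] Phi_zero[of X] by (simp add: fun_eq_iff)
lemma Phi_smult: "good sB X \<Longrightarrow> Phi X (ser_smult sA c f) = ser_smult sB c (Phi X f)"
  by (simp add: map_smult exp_smult)
lemma Phi_mult: "good sB X \<Longrightarrow> Phi X (ser_mult f g) = ser_mult (Phi X f) (Phi X g)"
  by (simp add: map_mult exp_mult)
lemma Phi_one: "good sB X \<Longrightarrow> Phi X ser_one = ser_one"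
  by (simp add: map_one exp_one)
lemma Phi_sh: "good sB X \<Longrightarrow> Phi X (sh f) = sh (Phi X f)"
  by (simp add: map_sh smult_sh[OF mB, symmetric] exp_smult)
lemma Phi_scale: "good sB X \<Longrightarrow> Phi X (\<lambda>n. sA r (f n)) = (\<lambda>n. sB r (Phi X f n))"
  by (simp add: map_scale smult_cs[OF mB, symmetric] exp_smult)

definition Delta where
  "Delta X f g = (\<lambda>n. Phi X (ser_bracket pid f g) n - ser_bracket sigma (Phi X f) (Phi X g) n)"

definition Inv where "Inv k X \<longleftrightarrow> (\<forall>f g n. n \<le> k \<longrightarrow> Delta X f g n = 0)"

lemma Delta_antisym:
  assumes g: "good sB X" shows "Delta X f g = (\<lambda>n. - Delta X g f n)"
proof -
  have "Phi X (ser_bracket pid f g) = (\<lambda>n. - Phi X (ser_bracket pid g f) n)"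
    by (subst antA) (simp add: Phi_neg[OF g])
  moreover have "ser_bracket sigma (Phi X f) (Phi X g) = (\<lambda>n. - ser_bracket sigma (Phi X g) (Phi X f) n)"
    by (rule antB)
  ultimately show ?thesis unfolding Delta_def by (simp add: fun_eq_iff)
qed

lemma Delta_add2:
  assumes g: "good sB X"
  shows "Delta X f (\<lambda>n. u n + v n) = (\<lambda>n. Delta X f u n + Delta X f v n)"
  unfolding Delta_def
  by (simp add: br_add2[where pb=pid, OF mA kbA] br_add2[where pb=sigma, OF mB kbB] Phi_add[OF g] fun_eq_iff)

lemma Delta_scale2:
  assumes g: "good sB X"
  shows "Delta X f (\<lambda>n. sA r (u n)) = (\<lambda>n. sB r (Delta X f u n))"
  unfolding Delta_def
  by (simp add: br_scale2[where pb=pid, OF mA kbA] br_scale2[where pb=sigma, OF mB kbB] Phi_scale[OF g] fun_eq_iff mB.scale_right_diff_distrib)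

lemma Delta_sh2:
  assumes g: "good sB X"
  shows "Delta X f (sh u) = sh (Delta X f u)"
  unfolding Delta_def
  by (simp add: br_sh2[where pb=pid, OF mA kbA] br_sh2[where pb=sigma, OF mB kbB] Phi_sh[OF g] sh_diff)

lemma Delta_mult2:
  assumes g: "good sB X"
  shows "Delta X f (ser_mult u v) = (\<lambda>n. ser_mult (Delta X f u) (Phi X v) n + ser_mult (Phi X u) (Delta X f v) n)"
  unfolding Delta_def
  by (simp add: leibA leibB Phi_add[OF g] Phi_mult[OF g] mult_diff1 mult_diff2 fun_eq_iff)

end



context main begin

interpretation mB: module sB by (rule mB)
interpretation mA: module sA by (rule mA)

lemma Delta_0: "Delta X f g 0 = 0"
  by (simp add: Delta_def br_0 Phi_0 pid0 sig0 phi_br)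

lemma Inv_0: "Inv 0 X"
  unfolding Inv_def using Delta_0 by auto

context
  fixes X k
  assumes g: "good sB X" and inv: "Inv k X"
begin

definition Dk where "Dk a b = Delta X (cs a) (cs b) (Suc k)"

lemma low: "i < Suc k \<Longrightarrow> Delta X f u i = 0"
  using inv by (simp add: Inv_def)

lemma Delta_loc2: "Delta X f u (Suc k) = Delta X f (cs (u 0)) (Suc k)"
proof -
  have "Delta X f u (Suc k) = Delta X f (\<lambda>n. cs (u 0) n + sh (\<lambda>n. u (Suc n)) n) (Suc k)"
    by (rule arg_cong[where f="\<lambda>u. Delta X f u (Suc k)"]) (rule decomp_sh)
  also have "\<dots> = Delta X f (cs (u 0)) (Suc k) + sh (Delta X f (\<lambda>n. u (Suc n))) (Suc k)"
    by (simp add: Delta_add2[OF g] Delta_sh2[OF g])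
  also have "sh (Delta X f (\<lambda>n. u (Suc n))) (Suc k) = 0"
    by (simp add: sh_def low)
  finally show ?thesis by simp
qed

lemma Delta_loc: "Delta X f u (Suc k) = Dk (f 0) (u 0)"
proof -
  have "Delta X f u (Suc k) = Delta X f (cs (u 0)) (Suc k)" by (rule Delta_loc2)
  also have "\<dots> = - Delta X (cs (u 0)) f (Suc k)" by (subst Delta_antisym[OF g]) simp
  also have "Delta X (cs (u 0)) f (Suc k) = Delta X (cs (u 0)) (cs (f 0)) (Suc k)" by (rule Delta_loc2)
  also have "\<dots> = - Delta X (cs (f 0)) (cs (u 0)) (Suc k)" by (subst Delta_antisym[OF g]) simp
  finally show ?thesis by (simp add: Dk_def cs_def)
qed

lemma Dk_antisym: "Dk a b = - Dk b a"
  unfolding Dk_def by (subst Delta_antisym[OF g]) simp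

lemma Dk_add2: "Dk a (b + c) = Dk a b + Dk a c"
  unfolding Dk_def cs_add by (simp add: Delta_add2[OF g])

lemma cs_scale: "cs (sA r b) = (\<lambda>n. sA r (cs b n))"
  by (auto simp: cs_def)

lemma Dk_scale2: "Dk a (sA r b) = sB r (Dk a b)"
  unfolding Dk_def cs_scale by (simp add: Delta_scale2[OF g])

lemma Dk_add1: "Dk (b + c) a = Dk b a + Dk c a"
  using Dk_antisym Dk_add2 by (metis minus_add_distrib)

lemma Dk_scale1: "Dk (sA r b) a = sB r (Dk b a)"
  using Dk_antisym Dk_scale2 by (metis mB.scale_minus_right)

lemma Dk_zero2: "Dk a 0 = 0"
  using Dk_add2[of a 0 0] by simp

lemma Dk_neg2: "Dk a (- b) = - Dk a b"
  using Dk_add2[of a b "- b"] Dk_zero2 by (simp add: eq_neg_iff_add_eq_0 add.commute)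

lemma Dk_neg1: "Dk (- b) a = - Dk b a"
  using Dk_antisym Dk_neg2 by metis

lemma Dk_der2: "Dk a (b * c) = phi0 b * Dk a c + Dk a b * phi0 c"
proof -
  have "Dk a (b * c) = Delta X (cs a) (ser_mult (cs b) (cs c)) (Suc k)"
    by (simp add: Dk_def mult_cs)
  also have "\<dots> = ser_mult (Delta X (cs a) (cs b)) (Phi X (cs c)) (Suc k)
                 + ser_mult (Phi X (cs b)) (Delta X (cs a) (cs c)) (Suc k)"
    by (simp add: Delta_mult2[OF g])
  also have "ser_mult (Delta X (cs a) (cs b)) (Phi X (cs c)) (Suc k) = Dk a b * phi0 c"
    by (subst mult_lowzero1[where p="Suc k"]) (auto simp: low Dk_def Phi_0 cs_def)
  also have "ser_mult (Phi X (cs b)) (Delta X (cs a) (cs c)) (Suc k) = phi0 b * Dk a c"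
    by (subst mult_lowzero2[where p="Suc k"]) (auto simp: low Dk_def Phi_0 cs_def)
  finally show ?thesis by (simp add: algebra_simps)
qed

lemma Dk_der1: "Dk (b * c) a = phi0 b * Dk c a + Dk b a * phi0 c"
  using Dk_der2[of a b c] Dk_antisym[of "b * c" a] Dk_antisym[of b a] Dk_antisym[of c a]
  by (simp add: algebra_simps)

lemma Dk_CE2: "CE2_der sA sB phi0 Dk"
  unfolding CE2_der_def kbilinear_def der_along_def
  by (auto simp: module_hom_iff mA mB Dk_add1 Dk_add2 Dk_scale1 Dk_scale2 Dk_der1 Dk_der2
                 intro: Dk_antisym)


lemma J_lemma:
  "Phi X (ser_bracket pid f (ser_bracket pid u w)) (Suc k)
   = ser_bracket sigma (Phi X f) (ser_bracket sigma (Phi X u) (Phi X w)) (Suc k)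
     + sigma0 (phi0 (f 0)) (Dk (u 0) (w 0)) + Dk (f 0) (pi0 (u 0) (w 0))"
proof -
  have e1: "Phi X (ser_bracket pid f (ser_bracket pid u w)) (Suc k)
     = ser_bracket sigma (Phi X f) (Phi X (ser_bracket pid u w)) (Suc k) + Delta X f (ser_bracket pid u w) (Suc k)"
    by (simp add: Delta_def)
  have e2: "Phi X (ser_bracket pid u w) = (\<lambda>n. ser_bracket sigma (Phi X u) (Phi X w) n + Delta X u w n)"
    by (simp add: Delta_def)
  have e3: "ser_bracket sigma (Phi X f) (Delta X u w) (Suc k) = sigma0 (phi0 (f 0)) (Dk (u 0) (w 0))"
    by (subst br_vanish2[where pb=sigma, OF mB kbB, of "Suc k"]) (auto simp: low sig0 Phi_0 Delta_loc)
  have e4: "Delta X f (ser_bracket pid u w) (Suc k) = Dk (f 0) (pi0 (u 0) (w 0))"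
    by (simp add: Delta_loc br_0 pid0)
  show ?thesis using e1 e3 e4 unfolding e2 by (simp add: br_add2[where pb=sigma, OF mB kbB])
qed

lemma Dk_cocycle: "ce_d2 pi0 sigma0 phi0 Dk = (\<lambda>_ _ _. 0)"
proof (intro ext)
  fix a b c :: 'a
  let ?f = "cs a" and ?g = "cs b" and ?h = "cs c"
  have "Phi X (\<lambda>n. ser_bracket pid ?f (ser_bracket pid ?g ?h) n + ser_bracket pid ?g (ser_bracket pid ?h ?f) n
                    + ser_bracket pid ?h (ser_bracket pid ?f ?g) n) = Phi X (\<lambda>_. 0)"
    by (subst jacA) (rule refl)
  then have "Phi X (ser_bracket pid ?f (ser_bracket pid ?g ?h)) (Suc k) + Phi X (ser_bracket pid ?g (ser_bracket pid ?h ?f)) (Suc k)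
      + Phi X (ser_bracket pid ?h (ser_bracket pid ?f ?g)) (Suc k) = 0"
    by (simp add: Phi_add[OF g] Phi_zero[OF g] fun_eq_iff)
  moreover have "ser_bracket sigma (Phi X ?f) (ser_bracket sigma (Phi X ?g) (Phi X ?h)) (Suc k)
     + ser_bracket sigma (Phi X ?g) (ser_bracket sigma (Phi X ?h) (Phi X ?f)) (Suc k)
     + ser_bracket sigma (Phi X ?h) (ser_bracket sigma (Phi X ?f) (Phi X ?g)) (Suc k) = 0"
    using fun_cong[OF jacB[of "Phi X ?f" "Phi X ?g" "Phi X ?h"], of "Suc k"] by simp
  ultimately have S: "sigma0 (phi0 a) (Dk b c) + Dk a (pi0 b c) + sigma0 (phi0 b) (Dk c a) + Dk b (pi0 c a)
      + sigma0 (phi0 c) (Dk a b) + Dk c (pi0 a b) = 0"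
    unfolding J_lemma by (simp add: cs_def algebra_simps)
  have f1: "sigma0 (phi0 b) (Dk c a) = - sigma0 (phi0 b) (Dk a c)"
    by (subst Dk_antisym) (rule sig_neg2)
  have f2: "Dk a (pi0 b c) = - Dk (pi0 b c) a" by (rule Dk_antisym)
  have f3: "Dk b (pi0 c a) = Dk (pi0 a c) b"
    by (subst Dk_antisym, subst piA_anti) (simp add: Dk_neg1)
  have f4: "Dk c (pi0 a b) = - Dk (pi0 a b) c" by (rule Dk_antisym)
  show "ce_d2 pi0 sigma0 phi0 Dk a b c = 0"
    using S unfolding ce_d2_def f1 f2 f3 f4 by (simp add: algebra_simps)
qed

lemma step: "\<exists>X'. good sB X' \<and> Inv (Suc k) X' \<and> (\<forall>j\<le>k. X' j = X j)"
proof -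
  from H2 Dk_CE2 Dk_cocycle obtain E where E: "CE1_der sA sB phi0 E" "ce_d1 pi0 sigma0 phi0 E = Dk"
    unfolding H2_CE_der_zero_def by blast
  from hl obtain h where "horizontal_lift sA sB phi0 h" by blast
  then have Y: "is_der sB (h E)" "h E \<circ> phi0 = E" using E(1) unfolding horizontal_lift_def by blast+
  define Y where "Y = h E"
  have YE: "Y (phi0 x) = E x" for x using fun_cong[OF Y(2), of x] by (simp add: Y_def)
  have Yd: "is_der sB Y" using Y(1) by (simp add: Y_def)
  define X' where "X' = pert X k Y"
  have g': "good sB X'" unfolding X'_def by (rule good_pert[OF g Yd])
  have agree: "\<forall>j\<le>k. X' j = X j" by (simp add: X'_def pert_def)
  have PhiX': "Phi X' u n = Phi X u n + (if n = Suc k then E (u 0) else 0)" if "n \<le> Suc k" for u n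
    using that by (simp add: X'_def exp_pert[OF g Yd] ser_map_def YE)
  have "Inv (Suc k) X'"
    unfolding Inv_def
  proof (intro allI impI)
    fix f w n assume n: "n \<le> Suc k"
    show "Delta X' f w n = 0"
    proof (cases "n = Suc k")
      case False
      then have nk: "n \<le> k" using n by simp
      have "Phi X' (ser_bracket pid f w) n = Phi X (ser_bracket pid f w) n"
        using PhiX'[of n] nk by simp
      moreover have "ser_bracket sigma (Phi X' f) (Phi X' w) n = ser_bracket sigma (Phi X f) (Phi X w) n"
        by (rule br_local) (use PhiX' nk in auto)
      ultimately have "Delta X' f w n = Delta X f w n" by (simp add: Delta_def)
      then show ?thesis using low nk by simp
    next
      case True
      define u where "u = Phi X f"
      define u' where "u' = Phi X' f"
      define v where "v = Phi X w"
      define v' where "v' = Phi X' w"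
      define ef where "ef = (\<lambda>n. u' n - u n)"
      define eg where "eg = (\<lambda>n. v' n - v n)"
      have ef_low: "i < Suc k \<Longrightarrow> ef i = 0" for i using PhiX'[of i] by (simp add: ef_def u_def u'_def)
      have eg_low: "i < Suc k \<Longrightarrow> eg i = 0" for i using PhiX'[of i] by (simp add: eg_def v_def v'_def)
      have ef_k: "ef (Suc k) = E (f 0)" using PhiX'[of "Suc k"] by (simp add: ef_def u_def u'_def)
      have eg_k: "eg (Suc k) = E (w 0)" using PhiX'[of "Suc k"] by (simp add: eg_def v_def v'_def)
      have u'e: "u' = (\<lambda>n. u n + ef n)" by (simp add: ef_def)
      have v'e: "v' = (\<lambda>n. v n + eg n)" by (simp add: eg_def)
      have b1: "ser_bracket sigma u eg (Suc k) = sigma0 (phi0 (f 0)) (E (w 0))"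
        by (subst br_vanish2[where pb=sigma, OF mB kbB, of "Suc k"]) (auto simp: eg_low eg_k sig0 u_def Phi_0)
      have b2: "ser_bracket sigma ef v' (Suc k) = - sigma0 (phi0 (w 0)) (E (f 0))"
        by (subst antB, subst br_vanish2[where pb=sigma, OF mB kbB, of "Suc k"]) (auto simp: ef_low ef_k sig0 v'_def Phi_0)
      have b: "ser_bracket sigma u' v' (Suc k) = ser_bracket sigma u v (Suc k)
          + sigma0 (phi0 (f 0)) (E (w 0)) - sigma0 (phi0 (w 0)) (E (f 0))"
      proof -
        have "ser_bracket sigma u' v' (Suc k) = ser_bracket sigma u v' (Suc k) + ser_bracket sigma ef v' (Suc k)"
          unfolding u'e by (simp add: br_add1[where pb=sigma, OF mB kbB])
        also have "ser_bracket sigma u v' (Suc k) = ser_bracket sigma u v (Suc k) + ser_bracket sigma u eg (Suc k)"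
          unfolding v'e by (simp add: br_add2[where pb=sigma, OF mB kbB])
        finally show ?thesis using b1 b2 by simp
      qed
      have p: "Phi X' (ser_bracket pid f w) (Suc k) = Phi X (ser_bracket pid f w) (Suc k) + E (pi0 (f 0) (w 0))"
        using PhiX'[of "Suc k"] by (simp add: br_0 pid0)
      have d: "Delta X f w (Suc k) = sigma0 (phi0 (f 0)) (E (w 0)) - sigma0 (phi0 (w 0)) (E (f 0)) - E (pi0 (f 0) (w 0))"
        using Delta_loc[of f w] fun_cong[OF fun_cong[OF E(2)], of "f 0" "w 0"] by (simp add: ce_d1_def)
      have "Delta X' f w (Suc k) = Phi X (ser_bracket pid f w) (Suc k) + E (pi0 (f 0) (w 0))
          - (ser_bracket sigma u v (Suc k) + sigma0 (phi0 (f 0)) (E (w 0)) - sigma0 (phi0 (w 0)) (E (f 0)))"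
        using p b unfolding Delta_def u'_def v'_def by simp
      also have "\<dots> = Delta X f w (Suc k) + E (pi0 (f 0) (w 0))
          - sigma0 (phi0 (f 0)) (E (w 0)) + sigma0 (phi0 (w 0)) (E (f 0))"
        by (simp add: Delta_def u_def v_def)
      finally show ?thesis using True d by simp
    qed
  qed
  then show ?thesis using g' agree by blast
qed

end
end



context main begin

interpretation mB: module sB by (rule mB)

definition nextX where
  "nextX k X = (SOME X'. good sB X' \<and> Inv (Suc k) X' \<and> (\<forall>j\<le>k. X' j = X j))"

primrec Xs :: "nat \<Rightarrow> nat \<Rightarrow> 'b \<Rightarrow> 'b" where
  "Xs 0 = (\<lambda>_ _. 0)"
| "Xs (Suc k) = nextX k (Xs k)"

lemma good_zero: "good sB (\<lambda>_ _. 0)"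
  unfolding good_def is_der_def by (simp add: module_hom_iff mB)

lemma nextX_prop:
  assumes "good sB X" "Inv k X"
  shows "good sB (nextX k X) \<and> Inv (Suc k) (nextX k X) \<and> (\<forall>j\<le>k. nextX k X j = X j)"
  unfolding nextX_def
  by (rule someI_ex[of "\<lambda>X'. good sB X' \<and> Inv (Suc k) X' \<and> (\<forall>j\<le>k. X' j = X j)", OF step[OF assms]])

lemma Xs_prop: "good sB (Xs k) \<and> Inv k (Xs k)"
proof (induction k)
  case 0 then show ?case using good_zero Inv_0 by simp
next
  case (Suc k) then show ?case using nextX_prop by simp
qed

lemma Xs_agree: "j \<le> k \<Longrightarrow> Xs (Suc k) j = Xs k j"
  using nextX_prop[of "Xs k" k] Xs_prop[of k] by simp

lemma Xs_stable: "j \<le> m \<Longrightarrow> Xs m j = Xs j j"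
proof (induction m rule: dec_induct)
  case base then show ?case by simp
next
  case (step n) then show ?case using Xs_agree[of j n] by simp
qed

definition Xf where "Xf = (\<lambda>j. Xs j j)"

lemma good_Xf: "good sB Xf"
  unfolding good_def Xf_def
proof
  show "Xs 0 0 = (\<lambda>_. 0)" by simp
  show "\<forall>j. is_der sB (Xs j j)" using Xs_prop by (simp add: good_def)
qed

lemma Phi_Xf: assumes "i \<le> n" shows "Phi Xf u i = Phi (Xs n) u i"
proof (rule exp_local)
  fix j assume "j \<le> i"
  then have "j \<le> n" using assms by simp
  then show "Xf j = Xs n j" unfolding Xf_def using Xs_stable[of j n] by simp
qed simp

lemma Delta_Xf: "Delta Xf f w n = 0"
proof -
  have a: "Phi Xf (ser_bracket pid f w) n = Phi (Xs n) (ser_bracket pid f w) n"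
    by (rule Phi_Xf) simp
  have b: "ser_bracket sigma (Phi Xf f) (Phi Xf w) n = ser_bracket sigma (Phi (Xs n) f) (Phi (Xs n) w) n"
    by (rule br_local) (auto simp: Phi_Xf)
  have "Delta Xf f w n = Delta (Xs n) f w n"
    unfolding Delta_def using a b by simp
  also have "\<dots> = 0" using Xs_prop[of n] by (simp add: Inv_def)
  finally show ?thesis .
qed

lemma final: "\<exists>X :: nat \<Rightarrow> 'b \<Rightarrow> 'b. X 0 = (\<lambda>_. 0) \<and> (\<forall>j. is_der sB (X j))
           \<and> ser_poisson_hom sA sB pid sigma (\<lambda>f. ser_exp sB X (ser_map phi0 f))"
proof (intro exI conjI)
  show "Xf 0 = (\<lambda>_. 0)" "\<forall>j. is_der sB (Xf j)" using good_Xf by (auto simp: good_def)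
  have br: "Phi Xf (ser_bracket pid f w) = ser_bracket sigma (Phi Xf f) (Phi Xf w)" for f w
    using Delta_Xf[of f w] by (auto simp: Delta_def fun_eq_iff)
  show "ser_poisson_hom sA sB pid sigma (\<lambda>f. Phi Xf f)"
    unfolding ser_poisson_hom_def
  proof (intro conjI allI)
    show "Phi Xf (\<lambda>n. f n + g n) = (\<lambda>n. Phi Xf f n + Phi Xf g n)" for f g
      by (rule Phi_add[OF good_Xf])
    show "Phi Xf (ser_smult sA c f) = ser_smult sB c (Phi Xf f)" for c f
      by (rule Phi_smult[OF good_Xf])
    show "Phi Xf (ser_mult f g) = ser_mult (Phi Xf f) (Phi Xf g)" for f g
      by (rule Phi_mult[OF good_Xf])
    show "Phi Xf ser_one = ser_one" by (rule Phi_one[OF good_Xf])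
    show "Phi Xf (ser_bracket pid f g) = ser_bracket sigma (Phi Xf f) (Phi Xf g)" for f g
      by (rule br)
  qed
qed

end

theorem proposition3p6:
  fixes sA :: "'k::field_char_0 \<Rightarrow> 'a::comm_ring_1 \<Rightarrow> 'a"
    and sB :: "'k \<Rightarrow> 'b::comm_ring_1 \<Rightarrow> 'b"
    and pi0 :: "'a \<Rightarrow> 'a \<Rightarrow> 'a" and sigma0 :: "'b \<Rightarrow> 'b \<Rightarrow> 'b"
    and phi0 :: "'a \<Rightarrow> 'b"
    and pid :: "nat \<Rightarrow> 'a \<Rightarrow> 'a \<Rightarrow> 'a" and sigma :: "nat \<Rightarrow> 'b \<Rightarrow> 'b \<Rightarrow> 'b"
  assumes "kalg sA" and "kalg sB"
    and "poisson_bracket sA pi0" and "poisson_bracket sB sigma0"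
    and "poisson_hom sA sB pi0 sigma0 phi0"
    and "\<exists>h. horizontal_lift sA sB phi0 h"
    and "H2_CE_der_zero sA sB pi0 sigma0 phi0"
    and "formal_poisson_deformation sA pi0 pid"
    and "formal_poisson_deformation sB sigma0 sigma"
  shows "\<exists>X :: nat \<Rightarrow> 'b \<Rightarrow> 'b. X 0 = (\<lambda>_. 0) \<and> (\<forall>j. is_der sB (X j))
           \<and> ser_poisson_hom sA sB pid sigma (\<lambda>f. ser_exp sB X (ser_map phi0 f))"
proof -
  interpret main sB sA pi0 sigma0 phi0 pid sigma
    by (simp add: main_def main_axioms_def bset_def assms)
  show ?thesis by (rule final)
qed



end
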